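(* Let $\mathcal P$ be a Fitting program over a bilattice $\mathcal B$ and $\alpha\in\{\mathcal F,\mathcal T,\mathcal U,\mathcal I\}$. Then $\Psi'^{\alpha}_{\mathcal P}$ has two extreme oscillation points under the truth ordering, denoted $Fix^{\alpha}_{\mathcal F}$ and $Fix^{\alpha}_{\mathcal T}$, and $Fix^{\alpha}_{\mathcal F}\le_t Fix^{\alpha}_{\mathcal T}$.
   Context: A bilattice $\langle\mathcal B,\le_t,\le_k\rangle$ is a nonempty set with two partial orders, each making $\mathcal B$ a lattice with top and bottom. Under $\le_t$, meet and join are $\wedge,\vee$ (infinitary $\bigwedge,\bigvee$), bottom $\mathcal F$, top $\mathcal T$; under $\le_k$, meet and join are $\otimes,\oplus$ (infinitary $\bigotimes,\bigoplus$), bottom $\mathcal U$, top $\mathcal I$. Standing assumptions: $\mathcal B$ is complete for both orders, infinitely distributive, satisfies the infinitary interlacing conditions, and has a negation $\neg$ (an involution reversing $\le_t$ and preserving $\le_k$). A formula is built from literals ($A$ or $\neg A$) and elements of $\mathcal B$ using $\wedge,\vee,\otimes,\oplus,\exists,\forall$ (with built-in predicate $equal$). A clause is $P(x_1,\dots,x_n)\leftarrow\phi(x_1,\dots,x_n)$ with the body's free variables among $x_1,\dots,x_n$. A Fitting program is a finite set of clauses with no predicate letter heading more than one clause; Inst-$\mathcal P$ is its set of ground instances. $\mathcal V(\mathcal B)$: maps from ground atoms to $\mathcal B$ with pointwise orders/operations. Valuations extend to closed formulas compositionally ($v(\beta)=\beta$, connectives pointwise, $\exists$ as $\bigvee$,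 $\forall$ as $\bigwedge$ over closed-term instances, $v(equal(s,t))=\mathcal T$ if $s=t$ else $\mathcal F$). The contrajoin $v\bigtriangleup w$ evaluates likewise but gives $A$ the value $v(A)$ and $\neg A$ the value $\neg w(A)$. $\Psi_{\mathcal P}^{\alpha}(v,w)(A)=\alpha$ if $A$ heads no member of Inst-$\mathcal P$, and $=(v\bigtriangleup w)(B)$ if $A\leftarrow B\in$ Inst-$\mathcal P$. $\Psi'^{\alpha}_{\mathcal P}(v)$ is the $\le_t$-least (resp. $\le_t$-greatest, $\le_k$-least, $\le_k$-greatest) fixpoint of $x\mapsto\Psi_{\mathcal P}^{\alpha}(x,v)$ when $\alpha=\mathcal F$ (resp. $\mathcal T,\mathcal U,\mathcal I$), obtained as the limit of the transfinite iteration from the constant valuation $\alpha$. For an anti-monotonic $f$ on a complete lattice, the extreme oscillation points are the elements $\mu,\nu$ that are the least and greatest fixpoints of $f\circ f$; they satisfy $f(\mu)=\nu$, $f(\nu)=\mu$, and any $x,y$ with $f(x)=y$, $f(y)=x$ lie between $\mu$ and $\nu$. Here the lattice is $(\mathcal V(\mathcal B),\le_t)$, and $Fix^{\alpha}_{\mathcal F}$, $Fix^{\alpha}_{\mathcal T}$ denote respectively the $\le_t$-least and $\le_t$-greatest fixpoint of $\Psi'^{\alpha}_{\mathcal P}\circ\Psi'^{\alpha}_{\mathcal P}$. *)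

theory Defs
  imports Main
begin

text \<open>The truth order is the type-class order of a complete lattice:
  meet/join are inf/sup, infinitary Inf/Sup, bottom F = bot, top T = top.
  The knowledge order leqk with infinitary meet kInf and join kSup is given by
  parameters; binary k-meet/k-join are kInf {a,b} and kSup {a,b};
  U = kInf UNIV, I = kSup UNIV.  neg is the negation.\<close>

definition kmeet :: "('b set \<Rightarrow> 'b) \<Rightarrow> 'b \<Rightarrow> 'b \<Rightarrow> 'b" where
  "kmeet kInf a b = kInf {a, b}"

definition kjoin :: "('b set \<Rightarrow> 'b) \<Rightarrow> 'b \<Rightarrow> 'b \<Rightarrow> 'b" where
  "kjoin kSup a b = kSup {a, b}"

locale bilattice =
  fixes leqk :: "'b::complete_lattice \<Rightarrow> 'b \<Rightarrow> bool"
    and kInf :: "'b set \<Rightarrow> 'b"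
    and kSup :: "'b set \<Rightarrow> 'b"
    and neg :: "'b \<Rightarrow> 'b"
  assumes k_refl: "leqk a a"
    and k_trans: "leqk a b \<Longrightarrow> leqk b c \<Longrightarrow> leqk a c"
    and k_antisym: "leqk a b \<Longrightarrow> leqk b a \<Longrightarrow> a = b"
    and kInf_lower: "x \<in> A \<Longrightarrow> leqk (kInf A) x"
    and kInf_greatest: "(\<And>x. x \<in> A \<Longrightarrow> leqk z x) \<Longrightarrow> leqk z (kInf A)"
    and kSup_upper: "x \<in> A \<Longrightarrow> leqk x (kSup A)"
    and kSup_least: "(\<And>x. x \<in> A \<Longrightarrow> leqk x z) \<Longrightarrow> leqk (kSup A) z"
    and neg_neg: "neg (neg a) = a"
    and neg_t: "a \<le> b \<Longrightarrow> neg b \<le> neg a"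
    and neg_k: "leqk a b \<Longrightarrow> leqk (neg a) (neg b)"
    \<comment> \<open>infinitary interlacing: for a family of pairs (a_i, b_i), i in R\<close>
    and interlace_kInf: "(\<forall>(a, b) \<in> R. a \<le> b) \<Longrightarrow> kInf (fst ` R) \<le> kInf (snd ` R)"
    and interlace_kSup: "(\<forall>(a, b) \<in> R. a \<le> b) \<Longrightarrow> kSup (fst ` R) \<le> kSup (snd ` R)"
    and interlace_Inf: "(\<forall>(a, b) \<in> R. leqk a b) \<Longrightarrow> leqk (Inf (fst ` R)) (Inf (snd ` R))"
    and interlace_Sup: "(\<forall>(a, b) \<in> R. leqk a b) \<Longrightarrow> leqk (Sup (fst ` R)) (Sup (snd ` R))"
    and dist_inf_Sup: "B \<noteq> {} \<Longrightarrow> inf a (Sup B) = Sup (inf a ` B)"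
    and dist_inf_kInf: "B \<noteq> {} \<Longrightarrow> inf a (kInf B) = kInf (inf a ` B)"
    and dist_inf_kSup: "B \<noteq> {} \<Longrightarrow> inf a (kSup B) = kSup (inf a ` B)"
    and dist_sup_Inf: "B \<noteq> {} \<Longrightarrow> sup a (Inf B) = Inf (sup a ` B)"
    and dist_sup_kInf: "B \<noteq> {} \<Longrightarrow> sup a (kInf B) = kInf (sup a ` B)"
    and dist_sup_kSup: "B \<noteq> {} \<Longrightarrow> sup a (kSup B) = kSup (sup a ` B)"
    and dist_kmeet_Inf: "B \<noteq> {} \<Longrightarrow> kmeet kInf a (Inf B) = Inf (kmeet kInf a ` B)"
    and dist_kmeet_Sup: "B \<noteq> {} \<Longrightarrow> kmeet kInf a (Sup B) = Sup (kmeet kInf a ` B)"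
    and dist_kmeet_kSup: "B \<noteq> {} \<Longrightarrow> kmeet kInf a (kSup B) = kSup (kmeet kInf a ` B)"
    and dist_kjoin_Inf: "B \<noteq> {} \<Longrightarrow> kjoin kSup a (Inf B) = Inf (kjoin kSup a ` B)"
    and dist_kjoin_Sup: "B \<noteq> {} \<Longrightarrow> kjoin kSup a (Sup B) = Sup (kjoin kSup a ` B)"
    and dist_kjoin_kInf: "B \<noteq> {} \<Longrightarrow> kjoin kSup a (kInf B) = kInf (kjoin kSup a ` B)"

datatype ('f, 'v) trm = Var 'v | Fn 'f "('f, 'v) trm list"

datatype 'f gtrm = GFn 'f "'f gtrm list"

type_synonym ('p, 'f) gatom = "'p \<times> 'f gtrm list"

type_synonym ('p, 'f, 'b) valuation = "('p, 'f) gatom \<Rightarrow> 'b"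

datatype ('p, 'f, 'v) atm = PAt 'p "('f, 'v) trm list" | EqAt "('f, 'v) trm" "('f, 'v) trm"

text \<open>Formulas: literals (Lit True A is A, Lit False A is the negated atom),
  bilattice constants, the four binary connectives and the quantifiers.\<close>
datatype ('p, 'f, 'v, 'b) fm =
    Lit bool "('p, 'f, 'v) atm"
  | Cst 'b
  | Conj "('p, 'f, 'v, 'b) fm" "('p, 'f, 'v, 'b) fm"
  | Disj "('p, 'f, 'v, 'b) fm" "('p, 'f, 'v, 'b) fm"
  | KMeet "('p, 'f, 'v, 'b) fm" "('p, 'f, 'v, 'b) fm"
  | KJoin "('p, 'f, 'v, 'b) fm" "('p, 'f, 'v, 'b) fm"
  | Ex 'v "('p, 'f, 'v, 'b) fm"
  | All 'v "('p, 'f, 'v, 'b) fm"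

fun fv_trm :: "('f, 'v) trm \<Rightarrow> 'v set" where
  "fv_trm (Var x) = {x}"
| "fv_trm (Fn f ts) = \<Union> (set (map fv_trm ts))"

fun fv_atm :: "('p, 'f, 'v) atm \<Rightarrow> 'v set" where
  "fv_atm (PAt p ts) = \<Union> (set (map fv_trm ts))"
| "fv_atm (EqAt s t) = fv_trm s \<union> fv_trm t"

fun fv :: "('p, 'f, 'v, 'b) fm \<Rightarrow> 'v set" where
  "fv (Lit b a) = fv_atm a"
| "fv (Cst c) = {}"
| "fv (Conj \<phi> \<psi>) = fv \<phi> \<union> fv \<psi>"
| "fv (Disj \<phi> \<psi>) = fv \<phi> \<union> fv \<psi>"
| "fv (KMeet \<phi> \<psi>) = fv \<phi> \<union> fv \<psi>"
| "fv (KJoin \<phi> \<psi>) = fv \<phi> \<union> fv \<psi>"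
| "fv (Ex x \<phi>) = fv \<phi> - {x}"
| "fv (All x \<phi>) = fv \<phi> - {x}"

text \<open>Clauses P(x_1,...,x_n) <- body, represented as (P, [x_1,...,x_n], body).\<close>
type_synonym ('p, 'f, 'v, 'b) clause = "'p \<times> 'v list \<times> ('p, 'f, 'v, 'b) fm"

definition fitting_program :: "('p, 'f, 'v, 'b) clause set \<Rightarrow> bool" where
  "fitting_program P \<longleftrightarrow> finite P
     \<and> (\<forall>(p, xs, \<phi>) \<in> P. fv \<phi> \<subseteq> set xs)
     \<and> (\<forall>c \<in> P. \<forall>c' \<in> P. fst c = fst c' \<longrightarrow> c = c')"

fun inst :: "('v \<Rightarrow> 'f gtrm) \<Rightarrow> ('f, 'v) trm \<Rightarrow> 'f gtrm" where
  "inst \<sigma> (Var x) = \<sigma> x"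
| "inst \<sigma> (Fn f ts) = GFn f (map (inst \<sigma>) ts)"

fun atm_val :: "('p, 'f, 'b::complete_lattice) valuation \<Rightarrow> ('v \<Rightarrow> 'f gtrm)
    \<Rightarrow> ('p, 'f, 'v) atm \<Rightarrow> 'b" where
  "atm_val v \<sigma> (PAt p ts) = v (p, map (inst \<sigma>) ts)"
| "atm_val v \<sigma> (EqAt s t) = (if inst \<sigma> s = inst \<sigma> t then top else bot)"

text \<open>The ordinary extension of a valuation v is contra kInf kSup neg v v.\<close>
fun contra :: "('b::complete_lattice set \<Rightarrow> 'b) \<Rightarrow> ('b set \<Rightarrow> 'b) \<Rightarrow> ('b \<Rightarrow> 'b)
    \<Rightarrow> ('p, 'f, 'b) valuation \<Rightarrow> ('p, 'f, 'b) valuation \<Rightarrow> ('v \<Rightarrow> 'f gtrm)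
    \<Rightarrow> ('p, 'f, 'v, 'b) fm \<Rightarrow> 'b" where
  "contra kInf kSup neg v w \<sigma> (Lit True a) = atm_val v \<sigma> a"
| "contra kInf kSup neg v w \<sigma> (Lit False a) = neg (atm_val w \<sigma> a)"
| "contra kInf kSup neg v w \<sigma> (Cst c) = c"
| "contra kInf kSup neg v w \<sigma> (Conj \<phi> \<psi>) =
     inf (contra kInf kSup neg v w \<sigma> \<phi>) (contra kInf kSup neg v w \<sigma> \<psi>)"
| "contra kInf kSup neg v w \<sigma> (Disj \<phi> \<psi>) =
     sup (contra kInf kSup neg v w \<sigma> \<phi>) (contra kInf kSup neg v w \<sigma> \<psi>)"
| "contra kInf kSup neg v w \<sigma> (KMeet \<phi> \<psi>) =
     kmeet kInf (contra kInf kSup neg v w \<sigma> \<phi>) (contra kInf kSup neg v w \<sigma> \<psi>)"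
| "contra kInf kSup neg v w \<sigma> (KJoin \<phi> \<psi>) =
     kjoin kSup (contra kInf kSup neg v w \<sigma> \<phi>) (contra kInf kSup neg v w \<sigma> \<psi>)"
| "contra kInf kSup neg v w \<sigma> (Ex x \<phi>) =
     (SUP t. contra kInf kSup neg v w (\<sigma>(x := t)) \<phi>)"
| "contra kInf kSup neg v w \<sigma> (All x \<phi>) =
     (INF t. contra kInf kSup neg v w (\<sigma>(x := t)) \<phi>)"

datatype alpha = AF | AT | AU | AI

fun alpha_val :: "('b::complete_lattice set \<Rightarrow> 'b) \<Rightarrow> ('b set \<Rightarrow> 'b) \<Rightarrow> alpha \<Rightarrow> 'b" where
  "alpha_val kInf kSup AF = bot"
| "alpha_val kInf kSup AT = top"
| "alpha_val kInf kSup AU = kInf UNIV"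
| "alpha_val kInf kSup AI = kSup UNIV"

text \<open>The ground atom A heads a member of Inst-P iff some clause (p, xs, phi) of P
  and some assignment sigma of closed terms satisfy A = (p, map sigma xs);
  the body of that ground instance is phi instantiated by sigma.\<close>
definition heads :: "('p, 'f, 'v, 'b) clause set \<Rightarrow> ('p, 'f) gatom
    \<Rightarrow> ('p, 'f, 'v, 'b) clause \<Rightarrow> ('v \<Rightarrow> 'f gtrm) \<Rightarrow> bool" where
  "heads P A c \<sigma> \<longleftrightarrow> c \<in> P \<and> A = (fst c, map \<sigma> (fst (snd c)))"

definition Psi :: "('b::complete_lattice set \<Rightarrow> 'b) \<Rightarrow> ('b set \<Rightarrow> 'b) \<Rightarrow> ('b \<Rightarrow> 'b)
    \<Rightarrow> alpha \<Rightarrow> ('p, 'f, 'v, 'b) clause set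
    \<Rightarrow> ('p, 'f, 'b) valuation \<Rightarrow> ('p, 'f, 'b) valuation \<Rightarrow> ('p, 'f, 'b) valuation" where
  "Psi kInf kSup neg a P v w A =
     (if \<exists>c \<sigma>. heads P A c \<sigma>
      then (let (c, \<sigma>) = (SOME (c, \<sigma>). heads P A c \<sigma>)
            in contra kInf kSup neg v w \<sigma> (snd (snd c)))
      else alpha_val kInf kSup a)"

definition vleqk :: "('b \<Rightarrow> 'b \<Rightarrow> bool) \<Rightarrow> ('a \<Rightarrow> 'b) \<Rightarrow> ('a \<Rightarrow> 'b) \<Rightarrow> bool" where
  "vleqk leqk x y \<longleftrightarrow> (\<forall>A. leqk (x A) (y A))"

definition vkInf :: "('b set \<Rightarrow> 'b) \<Rightarrow> ('a \<Rightarrow> 'b) set \<Rightarrow> 'a \<Rightarrow> 'b" where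
  "vkInf kInf S = (\<lambda>A. kInf ((\<lambda>x. x A) ` S))"

definition vkSup :: "('b set \<Rightarrow> 'b) \<Rightarrow> ('a \<Rightarrow> 'b) set \<Rightarrow> 'a \<Rightarrow> 'b" where
  "vkSup kSup S = (\<lambda>A. kSup ((\<lambda>x. x A) ` S))"

definition klfp :: "('b \<Rightarrow> 'b \<Rightarrow> bool) \<Rightarrow> ('b set \<Rightarrow> 'b)
    \<Rightarrow> (('a \<Rightarrow> 'b) \<Rightarrow> ('a \<Rightarrow> 'b)) \<Rightarrow> 'a \<Rightarrow> 'b" where
  "klfp leqk kInf f = vkInf kInf {x. vleqk leqk (f x) x}"

definition kgfp :: "('b \<Rightarrow> 'b \<Rightarrow> bool) \<Rightarrow> ('b set \<Rightarrow> 'b)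
    \<Rightarrow> (('a \<Rightarrow> 'b) \<Rightarrow> ('a \<Rightarrow> 'b)) \<Rightarrow> 'a \<Rightarrow> 'b" where
  "kgfp leqk kSup f = vkSup kSup {x. vleqk leqk x (f x)}"

fun Psi' :: "('b::complete_lattice \<Rightarrow> 'b \<Rightarrow> bool) \<Rightarrow> ('b set \<Rightarrow> 'b) \<Rightarrow> ('b set \<Rightarrow> 'b)
    \<Rightarrow> ('b \<Rightarrow> 'b) \<Rightarrow> alpha \<Rightarrow> ('p, 'f, 'v, 'b) clause set
    \<Rightarrow> ('p, 'f, 'b) valuation \<Rightarrow> ('p, 'f, 'b) valuation" where
  "Psi' leqk kInf kSup neg AF P v = lfp (\<lambda>x. Psi kInf kSup neg AF P x v)"
| "Psi' leqk kInf kSup neg AT P v = gfp (\<lambda>x. Psi kInf kSup neg AT P x v)"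
| "Psi' leqk kInf kSup neg AU P v = klfp leqk kInf (\<lambda>x. Psi kInf kSup neg AU P x v)"
| "Psi' leqk kInf kSup neg AI P v = kgfp leqk kSup (\<lambda>x. Psi kInf kSup neg AI P x v)"

definition extreme_oscillation_points :: "('a::complete_lattice \<Rightarrow> 'a) \<Rightarrow> 'a \<Rightarrow> 'a \<Rightarrow> bool" where
  "extreme_oscillation_points f \<mu> \<nu> \<longleftrightarrow>
     antimono f
     \<and> f (f \<mu>) = \<mu> \<and> (\<forall>x. f (f x) = x \<longrightarrow> \<mu> \<le> x)
     \<and> f (f \<nu>) = \<nu> \<and> (\<forall>x. f (f x) = x \<longrightarrow> x \<le> \<nu>)
     \<and> f \<mu> = \<nu> \<and> f \<nu> = \<mu>
     \<and> (\<forall>x y. f x = y \<and> f y = x \<longrightarrow> \<mu> \<le> x \<and> x \<le> \<nu> \<and> \<mu> \<le> y \<and> y \<le> \<nu>)"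

end

theory Submission
  imports Defs
begin

inductive_set kpairs :: "('b set \<Rightarrow> 'b) \<Rightarrow> (('a \<Rightarrow> 'b) \<Rightarrow> ('a \<Rightarrow> 'b))
   \<Rightarrow> (('a \<Rightarrow> 'b) \<Rightarrow> ('a \<Rightarrow> 'b)) \<Rightarrow> (('a \<Rightarrow> 'b) \<times> ('a \<Rightarrow> 'b)) set"
  for kS f g where
  kp_step: "(x, y) \<in> kpairs kS f g \<Longrightarrow> (f x, g y) \<in> kpairs kS f g"
| kp_lim: "\<forall>p\<in>R. p \<in> kpairs kS f g \<Longrightarrow>
     ((\<lambda>A. kS ((\<lambda>x. x A) ` fst ` R)), (\<lambda>A. kS ((\<lambda>x. x A) ` snd ` R))) \<in> kpairs kS f g"

context bilattice
begin

lemma kmeet_t_mono: "a \<le> a' \<Longrightarrow> b \<le> b' \<Longrightarrow> kmeet kInf a b \<le> kmeet kInf a' b'"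
  unfolding kmeet_def
  using interlace_kInf[of "{(a,a'),(b,b')}"] by auto

lemma kjoin_t_mono: "a \<le> a' \<Longrightarrow> b \<le> b' \<Longrightarrow> kjoin kSup a b \<le> kjoin kSup a' b'"
  unfolding kjoin_def
  using interlace_kSup[of "{(a,a'),(b,b')}"] by auto

lemma kmeet_k_mono: "leqk a a' \<Longrightarrow> leqk b b' \<Longrightarrow> leqk (kmeet kInf a b) (kmeet kInf a' b')"
  unfolding kmeet_def
  by (rule kInf_greatest) (auto intro: k_trans kInf_lower)

lemma kjoin_k_mono: "leqk a a' \<Longrightarrow> leqk b b' \<Longrightarrow> leqk (kjoin kSup a b) (kjoin kSup a' b')"
  unfolding kjoin_def
  by (rule kSup_least) (auto intro: k_trans kSup_upper)

lemma inf_k_mono: "leqk a a' \<Longrightarrow> leqk b b' \<Longrightarrow> leqk (inf a b) (inf a' b')"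
  using interlace_Inf[of "{(a,a'),(b,b')}"] by auto

lemma sup_k_mono: "leqk a a' \<Longrightarrow> leqk b b' \<Longrightarrow> leqk (sup a b) (sup a' b')"
  using interlace_Sup[of "{(a,a'),(b,b')}"] by auto

lemma SUP_k_mono: "(\<And>t. leqk (f t) (g t)) \<Longrightarrow> leqk (SUP t. f t) (SUP t. g t)"
  using interlace_Sup[of "range (\<lambda>t. (f t, g t))"] by (simp add: image_image)

lemma INF_k_mono: "(\<And>t. leqk (f t) (g t)) \<Longrightarrow> leqk (INF t. f t) (INF t. g t)"
  using interlace_Inf[of "range (\<lambda>t. (f t, g t))"] by (simp add: image_image)

lemma contra_t_mono:
  assumes "v \<le> v'" "w' \<le> w"
  shows "contra kInf kSup neg v w \<sigma> \<phi> \<le> contra kInf kSup neg v' w' \<sigma> \<phi>"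
proof (induction \<phi> arbitrary: \<sigma>)
  case (Lit b at)
  show ?case
  proof (cases b)
    case True
    then show ?thesis using assms(1) by (cases at) (auto simp: le_fun_def)
  next
    case False
    then show ?thesis using assms(2) by (cases at) (auto simp: le_fun_def intro: neg_t)
  qed
next
  case (Conj \<phi>1 \<phi>2) then show ?case by (metis contra.simps(4) inf_mono)
next
  case (Disj \<phi>1 \<phi>2) then show ?case by (metis contra.simps(5) sup_mono)
next
  case (KMeet \<phi>1 \<phi>2) then show ?case by (auto intro: kmeet_t_mono)
next
  case (KJoin \<phi>1 \<phi>2) then show ?case by (auto intro: kjoin_t_mono)
next
  case (Ex x \<phi>) then show ?case by (auto intro: SUP_mono)
next
  case (All x \<phi>) then show ?case by (auto intro: INF_mono)
qed simp

lemma contra_k_mono: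
  assumes "vleqk leqk v v'"
  shows "leqk (contra kInf kSup neg v w \<sigma> \<phi>) (contra kInf kSup neg v' w \<sigma> \<phi>)"
proof (induction \<phi> arbitrary: \<sigma>)
  case (Lit b at)
  show ?case
  proof (cases b)
    case True
    then show ?thesis using assms(1) by (cases at) (auto simp: vleqk_def k_refl)
  next
    case False
    then show ?thesis by (simp add: k_refl)
  qed
next
  case (Cst c) then show ?case by (simp add: k_refl)
next
  case (Conj \<phi>1 \<phi>2) then show ?case by (auto intro: inf_k_mono)
next
  case (Disj \<phi>1 \<phi>2) then show ?case by (auto intro: sup_k_mono)
next
  case (KMeet \<phi>1 \<phi>2) then show ?case by (auto intro: kmeet_k_mono)
next
  case (KJoin \<phi>1 \<phi>2) then show ?case by (auto intro: kjoin_k_mono)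
next
  case (Ex x \<phi>) then show ?case by (auto intro: SUP_k_mono)
next
  case (All x \<phi>) then show ?case by (auto intro: INF_k_mono)
qed

lemma Psi_t_mono:
  assumes "v \<le> v'" "w' \<le> w"
  shows "Psi kInf kSup neg a P v w \<le> Psi kInf kSup neg a P v' w'"
  unfolding le_fun_def Psi_def
  using contra_t_mono[OF assms] by (auto split: prod.split)

lemma Psi_k_mono:
  assumes "vleqk leqk v v'"
  shows "vleqk leqk (Psi kInf kSup neg a P v w) (Psi kInf kSup neg a P v' w)"
  unfolding vleqk_def Psi_def
  using contra_k_mono[OF assms] by (auto split: prod.split simp: k_refl)


lemma vleqk_antisym: "vleqk leqk x y \<Longrightarrow> vleqk leqk y x \<Longrightarrow> x = y"
  unfolding vleqk_def by (auto intro: k_antisym)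

lemma vleqk_trans: "vleqk leqk x y \<Longrightarrow> vleqk leqk y z \<Longrightarrow> vleqk leqk x z"
  unfolding vleqk_def by (auto intro: k_trans)

lemma klfp_lower: "vleqk leqk (f x) x \<Longrightarrow> vleqk leqk (klfp leqk kInf f) x"
  unfolding klfp_def vkInf_def vleqk_def by (auto intro: kInf_lower)

lemma klfp_greatest: "(\<And>x. vleqk leqk (f x) x \<Longrightarrow> vleqk leqk z x) \<Longrightarrow> vleqk leqk z (klfp leqk kInf f)"
  unfolding klfp_def vkInf_def vleqk_def by (auto intro!: kInf_greatest)

lemma klfp_prefix:
  assumes mono: "\<And>x y. vleqk leqk x y \<Longrightarrow> vleqk leqk (f x) (f y)"
  shows "vleqk leqk (f (klfp leqk kInf f)) (klfp leqk kInf f)"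
  by (rule klfp_greatest) (meson klfp_lower mono vleqk_trans)

lemma kgfp_upper: "vleqk leqk x (f x) \<Longrightarrow> vleqk leqk x (kgfp leqk kSup f)"
  unfolding kgfp_def vkSup_def vleqk_def by (auto intro: kSup_upper)

lemma kgfp_least: "(\<And>x. vleqk leqk x (f x) \<Longrightarrow> vleqk leqk x z) \<Longrightarrow> vleqk leqk (kgfp leqk kSup f) z"
  unfolding kgfp_def vkSup_def vleqk_def by (auto intro!: kSup_least)

lemma kgfp_postfix:
  assumes mono: "\<And>x y. vleqk leqk x y \<Longrightarrow> vleqk leqk (f x) (f y)"
  shows "vleqk leqk (kgfp leqk kSup f) (f (kgfp leqk kSup f))"
  by (rule kgfp_least) (meson kgfp_upper mono vleqk_trans)

lemma klfp_compare:
  assumes monof: "\<And>x y. vleqk leqk x y \<Longrightarrow> vleqk leqk (f x) (f y)"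
    and monog: "\<And>x y. vleqk leqk x y \<Longrightarrow> vleqk leqk (g x) (g y)"
    and tc: "\<And>x y. x \<le> y \<Longrightarrow> f x \<le> g y"
  shows "klfp leqk kInf f \<le> klfp leqk kInf g"
proof -
  let ?Q = "kpairs kSup f g"
  let ?Lf = "klfp leqk kInf f" and ?Lg = "klfp leqk kInf g"
  have inv1: "fst p \<le> snd p" if "p \<in> ?Q" for p
    using that
  proof (induction p rule: kpairs.induct)
    case (kp_step x y) then show ?case using tc by simp
  next
    case (kp_lim R)
    show ?case
    proof (simp add: le_fun_def, intro allI)
      fix A
      have "kSup (fst ` (\<lambda>(x,y). (x A, y A)) ` R) \<le> kSup (snd ` (\<lambda>(x,y). (x A, y A)) ` R)"
        by (rule interlace_kSup) (use kp_lim in \<open>auto simp: le_fun_def\<close>)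
      moreover have "fst ` (\<lambda>(x,y). (x A, y A)) ` R = (\<lambda>x. x A) ` fst ` R"
        "snd ` (\<lambda>(x,y). (x A, y A)) ` R = (\<lambda>x. x A) ` snd ` R"
        by (auto simp: image_image image_iff split: prod.split) force+
      ultimately show "kSup ((\<lambda>x. x A) ` fst ` R) \<le> kSup ((\<lambda>x. x A) ` snd ` R)" by simp
    qed
  qed
  have pf: "vleqk leqk (f ?Lf) ?Lf" by (rule klfp_prefix[OF monof])
  have pg: "vleqk leqk (g ?Lg) ?Lg" by (rule klfp_prefix[OF monog])
  have inv2: "vleqk leqk (fst p) ?Lf \<and> vleqk leqk (snd p) ?Lg" if "p \<in> ?Q" for p
    using that
  proof (induction p rule: kpairs.induct)
    case (kp_step x y) then show ?case
      using monof monog pf pg vleqk_trans by (metis fst_conv snd_conv)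
  next
    case (kp_lim R)
    then show ?case
      unfolding vleqk_def by (auto intro!: kSup_least)
  qed
  define X where "X = (\<lambda>A. kSup ((\<lambda>x. x A) ` fst ` ?Q))"
  define Y where "Y = (\<lambda>A. kSup ((\<lambda>x. x A) ` snd ` ?Q))"
  have XY: "(X, Y) \<in> ?Q" unfolding X_def Y_def by (rule kp_lim) simp
  then have fXY: "(f X, g Y) \<in> ?Q" by (rule kp_step)
  have "vleqk leqk (f X) X" unfolding vleqk_def
    using fXY by (auto simp: X_def intro!: kSup_upper) force
  then have "vleqk leqk ?Lf X" by (rule klfp_lower)
  with inv2[OF XY] have X: "X = ?Lf" by (auto intro: vleqk_antisym)
  have "vleqk leqk (g Y) Y" unfolding vleqk_def
    using fXY by (auto simp: Y_def intro!: kSup_upper) force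
  then have "vleqk leqk ?Lg Y" by (rule klfp_lower)
  with inv2[OF XY] have Y: "Y = ?Lg" by (auto intro: vleqk_antisym)
  show ?thesis using inv1[OF XY] X Y by simp
qed

lemma kgfp_compare:
  assumes monof: "\<And>x y. vleqk leqk x y \<Longrightarrow> vleqk leqk (f x) (f y)"
    and monog: "\<And>x y. vleqk leqk x y \<Longrightarrow> vleqk leqk (g x) (g y)"
    and tc: "\<And>x y. x \<le> y \<Longrightarrow> f x \<le> g y"
  shows "kgfp leqk kSup f \<le> kgfp leqk kSup g"
proof -
  let ?Q = "kpairs kInf f g"
  let ?Lf = "kgfp leqk kSup f" and ?Lg = "kgfp leqk kSup g"
  have inv1: "fst p \<le> snd p" if "p \<in> ?Q" for p
    using that
  proof (induction p rule: kpairs.induct)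
    case (kp_step x y) then show ?case using tc by simp
  next
    case (kp_lim R)
    show ?case
    proof (simp add: le_fun_def, intro allI)
      fix A
      have "kInf (fst ` (\<lambda>(x,y). (x A, y A)) ` R) \<le> kInf (snd ` (\<lambda>(x,y). (x A, y A)) ` R)"
        by (rule interlace_kInf) (use kp_lim in \<open>auto simp: le_fun_def\<close>)
      moreover have "fst ` (\<lambda>(x,y). (x A, y A)) ` R = (\<lambda>x. x A) ` fst ` R"
        "snd ` (\<lambda>(x,y). (x A, y A)) ` R = (\<lambda>x. x A) ` snd ` R"
        by (auto simp: image_image image_iff split: prod.split) force+
      ultimately show "kInf ((\<lambda>x. x A) ` fst ` R) \<le> kInf ((\<lambda>x. x A) ` snd ` R)" by simp
    qed
  qed
  have pf: "vleqk leqk ?Lf (f ?Lf)" by (rule kgfp_postfix[OF monof])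
  have pg: "vleqk leqk ?Lg (g ?Lg)" by (rule kgfp_postfix[OF monog])
  have inv2: "vleqk leqk ?Lf (fst p) \<and> vleqk leqk ?Lg (snd p)" if "p \<in> ?Q" for p
    using that
  proof (induction p rule: kpairs.induct)
    case (kp_step x y) then show ?case
      using monof monog pf pg vleqk_trans by (metis fst_conv snd_conv)
  next
    case (kp_lim R)
    then show ?case
      unfolding vleqk_def by (auto intro!: kInf_greatest)
  qed
  define X where "X = (\<lambda>A. kInf ((\<lambda>x. x A) ` fst ` ?Q))"
  define Y where "Y = (\<lambda>A. kInf ((\<lambda>x. x A) ` snd ` ?Q))"
  have XY: "(X, Y) \<in> ?Q" unfolding X_def Y_def by (rule kp_lim) simp
  then have fXY: "(f X, g Y) \<in> ?Q" by (rule kp_step)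
  have "vleqk leqk X (f X)" unfolding vleqk_def
    using fXY by (auto simp: X_def intro!: kInf_lower) force
  then have "vleqk leqk X ?Lf" by (rule kgfp_upper)
  with inv2[OF XY] have X: "X = ?Lf" by (auto intro: vleqk_antisym)
  have "vleqk leqk Y (g Y)" unfolding vleqk_def
    using fXY by (auto simp: Y_def intro!: kInf_lower) force
  then have "vleqk leqk Y ?Lg" by (rule kgfp_upper)
  with inv2[OF XY] have Y: "Y = ?Lg" by (auto intro: vleqk_antisym)
  show ?thesis using inv1[OF XY] X Y by simp
qed


lemma Psi'_antimono:
  fixes P :: "('p, 'f, 'v, 'b) clause set"
  shows "antimono (Psi' leqk kInf kSup neg a P)"
proof (rule antimonoI)
  fix v v' :: "('p, 'f, 'b) valuation"
  assume vv: "v \<le> v'"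
  have tc: "\<And>x y. x \<le> y \<Longrightarrow> Psi kInf kSup neg a P x v' \<le> Psi kInf kSup neg a P y v"
    using Psi_t_mono vv by blast
  have km: "\<And>w x y. vleqk leqk x y \<Longrightarrow>
      vleqk leqk (Psi kInf kSup neg a P x w) (Psi kInf kSup neg a P y w)"
    by (rule Psi_k_mono)
  show "Psi' leqk kInf kSup neg a P v' \<le> Psi' leqk kInf kSup neg a P v"
  proof (cases a)
    case AF then show ?thesis using tc by (simp add: lfp_mono)
  next
    case AT then show ?thesis using tc by (simp add: gfp_mono)
  next
    case AU then show ?thesis using tc km by (simp add: klfp_compare)
  next
    case AI then show ?thesis using tc km by (simp add: kgfp_compare)
  qed
qed

end

lemma osc_points:
  fixes g :: "'a::complete_lattice \<Rightarrow> 'a"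
  assumes am: "antimono g"
  shows "extreme_oscillation_points g (lfp (g \<circ> g)) (gfp (g \<circ> g)) \<and> lfp (g \<circ> g) \<le> gfp (g \<circ> g)"
proof -
  have m: "mono (g \<circ> g)" using am by (auto simp: mono_def antimono_def)
  let ?mu = "lfp (g \<circ> g)" and ?nu = "gfp (g \<circ> g)"
  have mu: "g (g ?mu) = ?mu" using lfp_unfold[OF m] by simp
  have nu: "g (g ?nu) = ?nu" using gfp_unfold[OF m] by simp
  have lo: "\<And>x. g (g x) = x \<Longrightarrow> ?mu \<le> x" by (rule lfp_lowerbound) simp
  have up: "\<And>x. g (g x) = x \<Longrightarrow> x \<le> ?nu" by (rule gfp_upperbound) simp
  have "g ?mu \<le> ?nu" using up mu by simp
  moreover have "?nu \<le> g ?mu"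
  proof -
    have "?mu \<le> g ?nu" using lo nu by simp
    then have "g (g ?nu) \<le> g ?mu" using am by (auto simp: antimono_def)
    then show ?thesis using nu by simp
  qed
  ultimately have gmu: "g ?mu = ?nu" by simp
  have "g ?nu = ?mu" using gmu mu by simp
  moreover have "?mu \<le> ?nu" using up mu by simp
  ultimately show ?thesis
    unfolding extreme_oscillation_points_def using am mu nu lo up gmu by auto
qed


theorem proposition2:
  fixes leqk :: "'b::complete_lattice \<Rightarrow> 'b \<Rightarrow> bool"
    and kInf kSup :: "'b set \<Rightarrow> 'b"
    and neg :: "'b \<Rightarrow> 'b"
    and P :: "('p, 'f, 'v, 'b) clause set"
    and a :: alpha
  assumes "bilattice leqk kInf kSup neg"
    and "fitting_program P"
  shows "extreme_oscillation_points (Psi' leqk kInf kSup neg a P)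
           (lfp (Psi' leqk kInf kSup neg a P \<circ> Psi' leqk kInf kSup neg a P))
           (gfp (Psi' leqk kInf kSup neg a P \<circ> Psi' leqk kInf kSup neg a P))
       \<and> lfp (Psi' leqk kInf kSup neg a P \<circ> Psi' leqk kInf kSup neg a P)
         \<le> gfp (Psi' leqk kInf kSup neg a P \<circ> Psi' leqk kInf kSup neg a P)"
  using osc_points[OF bilattice.Psi'_antimono[OF assms(1)]] by blast

end
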